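(* For two candidates, using Weighted Majority Rule 5 (defined in the context), the selected candidate $W\in\{P,Q\}$ always satisfies $SC(W)\le\sqrt2\min\{SC(P),SC(Q)\}$, i.e., the distortion is at most $\sqrt2$; by the lower bound for exact strengths this is the best possible bound.
   Context: Voters $N$ and candidates $P,Q$ are points of an arbitrary metric space $(X,d)$; $SC(Y)=\sum_{i\in N}d(i,Y)$. $A$ is the set of voters preferring $P$ ($d(i,P)\le d(i,Q)$), with exact strengths $\alpha_i=d(i,Q)/d(i,P)$; $B$ the set preferring $Q$, with strengths $\beta_j=d(j,P)/d(j,Q)$. Define $w(x)=\frac{\sqrt2x-1}{x+1}$ if $x>\sqrt2$ and $w(x)=x-1$ if $1\le x\le\sqrt2$. Weighted Majority Rule 5: each $i\in A$ gets weight $w(\alpha_i)$, each $j\in B$ gets weight $w(\beta_j)$; select $P$ if $\sum_{i\in A}w(\alpha_i)\ge\sum_{j\in B}w(\beta_j)$, otherwise $Q$. *)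

theory Defs
  imports "HOL-Analysis.Analysis" "HOL-Library.Extended_Real"
begin

definition SC :: "'v set \<Rightarrow> ('v \<Rightarrow> 'a::metric_space) \<Rightarrow> 'a \<Rightarrow> real" where
  "SC N loc Y = (\<Sum>i\<in>N. dist (loc i) Y)"

definition prefA :: "'v set \<Rightarrow> ('v \<Rightarrow> 'a::metric_space) \<Rightarrow> 'a \<Rightarrow> 'a \<Rightarrow> 'v set" where
  "prefA N loc P Q = {i\<in>N. dist (loc i) P \<le> dist (loc i) Q}"

definition prefB :: "'v set \<Rightarrow> ('v \<Rightarrow> 'a::metric_space) \<Rightarrow> 'a \<Rightarrow> 'a \<Rightarrow> 'v set" where
  "prefB N loc P Q = {j\<in>N. \<not> dist (loc j) P \<le> dist (loc j) Q}"

text \<open>Exact strength d(i,other)/d(i,preferred), valued in [1,\<infinity>]; it is \<infinity> when the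
voter sits exactly at its preferred candidate (division by zero).\<close>
definition strength :: "real \<Rightarrow> real \<Rightarrow> ereal" where
  "strength dpref dother = (if dpref = 0 then \<infinity> else ereal (dother / dpref))"

text \<open>The weight function w; at \<infinity> it takes its limit value sqrt 2.\<close>
definition w5 :: "ereal \<Rightarrow> real" where
  "w5 x = (if x = \<infinity> then sqrt 2
           else if real_of_ereal x > sqrt 2
                then (sqrt 2 * real_of_ereal x - 1) / (real_of_ereal x + 1)
                else real_of_ereal x - 1)"

definition alpha :: "('v \<Rightarrow> 'a::metric_space) \<Rightarrow> 'a \<Rightarrow> 'a \<Rightarrow> 'v \<Rightarrow> ereal" where
  "alpha loc P Q i = strength (dist (loc i) P) (dist (loc i) Q)"

definition beta :: "('v \<Rightarrow> 'a::metric_space) \<Rightarrow> 'a \<Rightarrow> 'a \<Rightarrow> 'v \<Rightarrow> ereal" where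
  "beta loc P Q j = strength (dist (loc j) Q) (dist (loc j) P)"

definition WMR5 :: "'v set \<Rightarrow> ('v \<Rightarrow> 'a::metric_space) \<Rightarrow> 'a \<Rightarrow> 'a \<Rightarrow> 'a" where
  "WMR5 N loc P Q =
     (if (\<Sum>i\<in>prefA N loc P Q. w5 (alpha loc P Q i)) \<ge> (\<Sum>j\<in>prefB N loc P Q. w5 (beta loc P Q j))
      then P else Q)"

end

theory Submission
  imports Defs
begin

lemma s2: "sqrt 2 * sqrt 2 = (2::real)" "sqrt 2 > (1::real)"
  by auto

lemma LA:
  fixes p q D :: real
  assumes "0 \<le> p" "p \<le> q" "D \<le> p + q" "q \<le> p + D"
  shows "D * w5 (strength p q) \<le> sqrt 2 * q - p"
proof (cases "p = 0")
  case True
  then show ?thesis using assms s2 by (simp add: strength_def w5_def)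
next
  case False
  hence pp: "p > 0" using assms by simp
  define a where "a = q / p"
  have q: "q = a * p" using pp a_def by simp
  have a1: "1 \<le> a" using assms pp a_def by simp
  have Dle: "D \<le> p * (1 + a)" using assms q by (simp add: algebra_simps)
  have w: "w5 (strength p q) = (if a > sqrt 2 then (sqrt 2 * a - 1) / (a + 1) else a - 1)"
    using False a_def by (simp add: strength_def w5_def)
  show ?thesis
  proof (cases "a > sqrt 2")
    case True
    have pos: "sqrt 2 * a - 1 \<ge> 0" using True s2
      by (smt (verit) mult_less_cancel_left1 a1)
    have "D * ((sqrt 2 * a - 1) / (a + 1)) \<le> p * (1 + a) * ((sqrt 2 * a - 1) / (a + 1))"
      by (rule mult_right_mono[OF Dle]) (use pos a1 in simp)
    also have "\<dots> = sqrt 2 * q - p" using a1 q by (simp add: field_simps)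
    finally show ?thesis using True w by simp
  next
    case False
    have "D * (a - 1) \<le> p * (1 + a) * (a - 1)"
      by (rule mult_right_mono[OF Dle]) (use a1 in simp)
    also have "\<dots> = p * (a * a - 1)" by (simp add: algebra_simps)
    also have "\<dots> \<le> p * (sqrt 2 * a - 1)"
      using False a1 pp by (intro mult_left_mono) (auto intro: mult_right_mono)
    also have "\<dots> = sqrt 2 * q - p" using q by (simp add: algebra_simps)
    finally show ?thesis using False w by simp
  qed
qed

lemma LB:
  fixes p q D :: real
  assumes "0 \<le> q" "q \<le> p" "p \<le> q + D" "D \<le> p + q"
  shows "p - sqrt 2 * q \<le> D * w5 (strength q p)"
proof (cases "q = 0")
  case True
  have "p \<le> p * sqrt 2" using assms s2 by (smt (verit) mult_le_cancel_left1)
  then show ?thesis using True assms s2 by (simp add: strength_def w5_def)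
next
  case False
  hence qp: "q > 0" using assms by simp
  define b where "b = p / q"
  have p: "p = b * q" using qp b_def by simp
  have b1: "1 \<le> b" using assms qp b_def by simp
  have Dge: "q * (b - 1) \<le> D" using assms p by (simp add: algebra_simps)
  have w: "w5 (strength q p) = (if b > sqrt 2 then (sqrt 2 * b - 1) / (b + 1) else b - 1)"
    using False b_def by (simp add: strength_def w5_def)
  show ?thesis
  proof (cases "b > sqrt 2")
    case True
    have pos: "sqrt 2 * b - 1 \<ge> 0" using True s2 b1
      by (smt (verit) mult_less_cancel_left1)
    have key: "(b - sqrt 2) * (b + 1) \<le> (b - 1) * (sqrt 2 * b - 1)"
    proof -
      have "(b - 1) * (sqrt 2 * b - 1) - (b - sqrt 2) * (b + 1)
            = (sqrt 2 - 1) * (b - (sqrt 2 + 1)) ^ 2"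
        using s2 by (simp add: power2_eq_square algebra_simps)
      moreover have "(sqrt 2 - 1) * (b - (sqrt 2 + 1)) ^ 2 \<ge> 0" using s2 by simp
      ultimately show ?thesis by linarith
    qed
    have "p - sqrt 2 * q = q * (b - sqrt 2) * (b + 1) / (b + 1)"
      using p b1 by (simp add: field_simps)
    also have "\<dots> \<le> q * ((b - 1) * (sqrt 2 * b - 1)) / (b + 1)"
      using key qp b1 by (intro divide_right_mono) (auto simp: mult.assoc intro: mult_left_mono)
    also have "\<dots> = q * (b - 1) * ((sqrt 2 * b - 1) / (b + 1))" by simp
    also have "\<dots> \<le> D * ((sqrt 2 * b - 1) / (b + 1))"
      by (rule mult_right_mono[OF Dge]) (use pos b1 in simp)
    finally show ?thesis using True w by simp
  next
    case False
    have "p - sqrt 2 * q \<le> 0" using False p qp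
      by (smt (verit) mult_right_mono)
    moreover have "D * (b - 1) \<ge> 0" using Dge qp b1
      by (smt (verit) mult_nonneg_nonneg)
    ultimately show ?thesis using False w by simp
  qed
qed

lemma half:
  fixes N :: "'v set" and f g :: "'v \<Rightarrow> real" and A B :: "'v set" and wa wb :: "'v \<Rightarrow> real"
  assumes "finite N" "A \<union> B = N" "A \<inter> B = {}"
    and "\<And>i. i \<in> A \<Longrightarrow> D * wa i \<le> sqrt 2 * f i - g i"
    and "\<And>i. i \<in> B \<Longrightarrow> g i - sqrt 2 * f i \<le> D * wb i"
    and "sum wb B \<le> sum wa A" "D \<ge> 0"
  shows "sum g N \<le> sqrt 2 * sum f N"
proof -
  have NAB: "N = A \<union> B" "A \<inter> B = {}" "finite A" "finite B" using assms(1-3) by auto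
  have "D * sum wb B \<le> D * sum wa A" using assms(6,7) by (simp add: mult_left_mono)
  also have "D * sum wa A \<le> (\<Sum>i\<in>A. sqrt 2 * f i - g i)"
    unfolding sum_distrib_left by (rule sum_mono) (use assms(4) in auto)
  finally have "D * sum wb B \<le> (\<Sum>i\<in>A. sqrt 2 * f i - g i)" .
  moreover have "(\<Sum>i\<in>B. g i - sqrt 2 * f i) \<le> D * sum wb B"
    unfolding sum_distrib_left by (rule sum_mono) (use assms(5) in auto)
  ultimately have "(\<Sum>i\<in>B. g i - sqrt 2 * f i) \<le> (\<Sum>i\<in>A. sqrt 2 * f i - g i)" by linarith
  hence "(\<Sum>i\<in>A. g i) + (\<Sum>i\<in>B. g i) \<le> sqrt 2 * ((\<Sum>i\<in>A. f i) + (\<Sum>i\<in>B. f i))"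
    by (simp add: sum_subtractf sum_distrib_left sum_distrib_right algebra_simps)
  thus ?thesis using NAB by (simp add: sum.union_disjoint)
qed

theorem mainTheorem12:
  fixes N :: "'v set" and loc :: "'v \<Rightarrow> 'a::metric_space" and P Q :: 'a
  assumes "finite N"
  shows "SC N loc (WMR5 N loc P Q) \<le> sqrt 2 * min (SC N loc P) (SC N loc Q)"
proof -
  define D where "D = dist P Q"
  have tri: "\<And>i. D \<le> dist (loc i) P + dist (loc i) Q"
    "\<And>i. dist (loc i) Q \<le> dist (loc i) P + D"
    "\<And>i. dist (loc i) P \<le> dist (loc i) Q + D"
    unfolding D_def by (metis dist_commute dist_triangle)+
  have D0: "D \<ge> 0" unfolding D_def by simp
  note tri = tri[unfolded D_def] D0[unfolded D_def] tri(1)[unfolded D_def, THEN order_trans, OF eq_refl[OF add.commute]]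
  have nn: "0 \<le> SC N loc P" "0 \<le> SC N loc Q" unfolding SC_def by (auto intro: sum_nonneg)
  have s1: "\<And>x::real. 0 \<le> x \<Longrightarrow> x \<le> sqrt 2 * x" using s2 by (smt (verit) mult_le_cancel_right1)
  show ?thesis
  proof (cases "(\<Sum>i\<in>prefA N loc P Q. w5 (alpha loc P Q i)) \<ge> (\<Sum>j\<in>prefB N loc P Q. w5 (beta loc P Q j))")
    case True
    have "SC N loc P \<le> sqrt 2 * SC N loc Q"
      unfolding SC_def
      by (rule half[OF assms, where A="prefA N loc P Q" and B="prefB N loc P Q" and D=D
            and wa="\<lambda>i. w5 (alpha loc P Q i)" and wb="\<lambda>i. w5 (beta loc P Q i)"])
        (use True tri in \<open>auto simp: prefA_def prefB_def alpha_def beta_def D_def intro!: LA LB\<close>)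
    then show ?thesis using True s1[OF nn(1)] s1[OF nn(2)] by (simp add: WMR5_def min_def)
  next
    case False
    have "SC N loc Q \<le> sqrt 2 * SC N loc P"
      unfolding SC_def
      by (rule half[OF assms, where A="prefB N loc P Q" and B="prefA N loc P Q" and D=D
            and wa="\<lambda>i. w5 (beta loc P Q i)" and wb="\<lambda>i. w5 (alpha loc P Q i)"])
        (use False tri in \<open>auto simp: prefA_def prefB_def alpha_def beta_def D_def intro!: LA LB\<close>)
    then show ?thesis using False s1[OF nn(1)] s1[OF nn(2)] by (simp add: WMR5_def min_def)
  qed
qed

end
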